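(* Fix an integer $d\ge1$. For every $0<a<b$ there is a constant $C(a,b)$ (depending only on $a,b,d$, not on $n$) such that $L$ is $C(a,b)$-Lipschitz on $\{x:a\le\|x\|\le b\}$, and for every $a>0$ there is $C(a)$ (depending only on $a,d$) such that $\|\nabla^2L(x)\|_{op}\le C(a)$ at every point $x$ with $\|x\|\ge a$ where $L$ is twice differentiable.
   Context: $e_1=(1,0,\dots,0)\in\mathbb{R}^n$; for $x\neq0$, $\theta(x)\in[0,\pi]$ is the angle between $x$ and $e_1$. $g(\theta)=\arccos\big(\frac{(\pi-\theta)\cos\theta+\sin\theta}{\pi}\big)$ and $g^{\circ d}$ is its $d$-fold composition. The loss is $L(x)=\frac12\|x\|^2-\|x\|\cos\big(g^{\circ d}(\theta(x))\big)+\frac12$. *)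

theory Defs
  imports Complex_Main
begin

text \<open>Since the constants must be uniform in the dimension n, the dimension cannot be
a type parameter. We model R^n explicitly: a point of R^n is a function
x :: nat => real with x i = 0 for all i >= n (coordinates 0..n-1; e_1 is coordinate 0).\<close>

definition Rn :: "nat \<Rightarrow> (nat \<Rightarrow> real) set" where
  "Rn n = {x. \<forall>i\<ge>n. x i = 0}"

definition vadd :: "(nat \<Rightarrow> real) \<Rightarrow> (nat \<Rightarrow> real) \<Rightarrow> (nat \<Rightarrow> real)" where
  "vadd x y = (\<lambda>i. x i + y i)"

definition vsub :: "(nat \<Rightarrow> real) \<Rightarrow> (nat \<Rightarrow> real) \<Rightarrow> (nat \<Rightarrow> real)" where
  "vsub x y = (\<lambda>i. x i - y i)"

definition vinner :: "nat \<Rightarrow> (nat \<Rightarrow> real) \<Rightarrow> (nat \<Rightarrow> real) \<Rightarrow> real" where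
  "vinner n x y = (\<Sum>i<n. x i * y i)"

definition vnorm :: "nat \<Rightarrow> (nat \<Rightarrow> real) \<Rightarrow> real" where
  "vnorm n x = sqrt (\<Sum>i<n. (x i)^2)"

definition e1 :: "nat \<Rightarrow> real" where
  "e1 = (\<lambda>i. if i = 0 then 1 else 0)"

definition vangle :: "nat \<Rightarrow> (nat \<Rightarrow> real) \<Rightarrow> real" where
  "vangle n x = arccos (vinner n x e1 / vnorm n x)"

definition gmap :: "real \<Rightarrow> real" where
  "gmap t = arccos (((pi - t) * cos t + sin t) / pi)"

definition loss :: "nat \<Rightarrow> nat \<Rightarrow> (nat \<Rightarrow> real) \<Rightarrow> real" where
  "loss d n x = (1/2) * (vnorm n x)^2 - vnorm n x * cos ((gmap ^^ d) (vangle n x)) + 1/2"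

definition mv :: "nat \<Rightarrow> (nat \<Rightarrow> nat \<Rightarrow> real) \<Rightarrow> (nat \<Rightarrow> real) \<Rightarrow> (nat \<Rightarrow> real)" where
  "mv n H h = (\<lambda>i. if i < n then (\<Sum>j<n. H i j * h j) else 0)"

definition has_grad :: "nat \<Rightarrow> ((nat \<Rightarrow> real) \<Rightarrow> real) \<Rightarrow> (nat \<Rightarrow> real) \<Rightarrow> (nat \<Rightarrow> real) \<Rightarrow> bool" where
  "has_grad n f G x \<longleftrightarrow> G \<in> Rn n \<and>
     (\<forall>e>0. \<exists>\<delta>>0. \<forall>h\<in>Rn n. vnorm n h < \<delta> \<longrightarrow>
        \<bar>f (vadd x h) - f x - vinner n G h\<bar> \<le> e * vnorm n h)"

definition twice_diff_hess :: "nat \<Rightarrow> ((nat \<Rightarrow> real) \<Rightarrow> real) \<Rightarrow> (nat \<Rightarrow> real) \<Rightarrow> (nat \<Rightarrow> nat \<Rightarrow> real) \<Rightarrow> bool" where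
  "twice_diff_hess n f x H \<longleftrightarrow> (\<exists>r>0. \<exists>G.
     (\<forall>y\<in>Rn n. vnorm n (vsub y x) < r \<longrightarrow> has_grad n f (G y) y) \<and>
     (\<forall>e>0. \<exists>\<delta>>0. \<forall>h\<in>Rn n. vnorm n h < \<delta> \<longrightarrow>
        vnorm n (vsub (vsub (G (vadd x h)) (G x)) (mv n H h)) \<le> e * vnorm n h))"

definition opnorm :: "nat \<Rightarrow> (nat \<Rightarrow> nat \<Rightarrow> real) \<Rightarrow> real" where
  "opnorm n H = Sup {vnorm n (mv n H v) | v. v \<in> Rn n \<and> vnorm n v \<le> 1}"

end

theory Submission
  imports Defs "HOL-Analysis.Analysis"
begin


definition kf :: "real \<Rightarrow> real" where
  "kf c = (sqrt (1 - c\<^sup>2) + (pi - arccos c) * c) / pi"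
definition kp :: "real \<Rightarrow> real" where
  "kp c = (pi - arccos c) / pi"

lemma kp_range: "-1 \<le> c \<Longrightarrow> c \<le> 1 \<Longrightarrow> 0 \<le> kp c \<and> kp c \<le> 1"
  using arccos_lbound[of c] arccos_ubound[of c] pi_gt_zero
  by (auto simp: kp_def field_simps)

lemma kf_deriv_int:
  assumes "-1 < c" "c < 1"
  shows "(kf has_real_derivative kp c) (at c)"
proof -
  have p: "0 < 1 - c\<^sup>2" using assms by (simp add: abs_square_less_1)
  have s: "sqrt (1 - c\<^sup>2) > 0" using p by simp
  have da: "(arccos has_real_derivative inverse (- sqrt (1 - c\<^sup>2))) (at c)"
    using DERIV_arccos assms by blast
  have ds: "((\<lambda>c. sqrt (1 - c\<^sup>2)) has_real_derivative inverse (sqrt (1 - c\<^sup>2)) / 2 * (- (2 * c))) (at c)"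
  proof -
    have ds0: "((\<lambda>c. 1 - c\<^sup>2) has_real_derivative (- (2 * c))) (at c)"
      by (auto intro!: derivative_eq_intros)
    show ?thesis using DERIV_chain2[OF DERIV_real_sqrt[OF p] ds0] by simp
  qed
  have dm: "((\<lambda>c. (pi - arccos c) * c) has_real_derivative (0 - inverse (- sqrt (1 - c\<^sup>2))) * c + 1 * (pi - arccos c)) (at c)"
    by (rule DERIV_mult[OF DERIV_diff[OF DERIV_const da] DERIV_ident])
  have "((\<lambda>c. (sqrt (1 - c\<^sup>2) + (pi - arccos c) * c) / pi) has_real_derivative
        (inverse (sqrt (1 - c\<^sup>2)) / 2 * (- (2 * c)) + ((0 - inverse (- sqrt (1 - c\<^sup>2))) * c + 1 * (pi - arccos c))) / pi) (at c)"
    by (rule DERIV_cdivide[OF DERIV_add[OF ds dm]])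
  moreover have "(inverse (sqrt (1 - c\<^sup>2)) / 2 * (- (2 * c)) + ((0 - inverse (- sqrt (1 - c\<^sup>2))) * c + 1 * (pi - arccos c))) / pi = kp c"
    using s by (simp add: kp_def field_simps)
  ultimately show ?thesis unfolding kf_def[abs_def] by simp
qed

lemma kf_cont: "continuous_on {-1..1} kf"
  unfolding kf_def[abs_def]
  by (intro continuous_intros) (auto simp: abs_square_le_1)

lemma kp_cont: "continuous_on {-1..1} kp"
  unfolding kp_def[abs_def]
  by (intro continuous_intros) auto

lemma kf_integral:
  assumes "-1 \<le> u" "u \<le> v" "v \<le> 1"
  shows "(kp has_integral (kf v - kf u)) {u..v}"
proof (rule fundamental_theorem_of_calculus_interior)
  show "continuous_on {u..v} kf" using kf_cont continuous_on_subset assms by fastforce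
  fix x assume "x \<in> {u<..<v}"
  then show "(kf has_vector_derivative kp x) (at x)"
    using kf_deriv_int[of x] assms by (auto simp: has_real_derivative_iff_has_vector_derivative[symmetric])
qed (use assms in auto)

lemma kf_deriv:
  assumes "-1 \<le> c" "c \<le> 1"
  shows "(kf has_real_derivative kp c) (at c within {-1..1})"
proof -
  have "((\<lambda>u. kf (-1) + integral {-1..u} kp) has_real_derivative (0 + kp c)) (at c within {-1..1})"
    by (intro derivative_intros integral_has_real_derivative kp_cont) (use assms in auto)
  then have d: "((\<lambda>u. kf (-1) + integral {-1..u} kp) has_real_derivative kp c) (at c within {-1..1})" by simp
  show ?thesis
  proof (rule has_field_derivative_transform_within[OF d, of 1])
    fix x assume "x \<in> {-1..1::real}"
    then have "integral {-1..x} kp = kf x - kf (-1)" using kf_integral[of "-1" x] by (auto intro: integral_unique)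
    then show "kf (-1) + integral {-1..x} kp = kf x" by simp
  qed (use assms in auto)
qed

lemma kf_range:
  assumes "-1 \<le> c" "c \<le> 1"
  shows "0 \<le> kf c \<and> kf c \<le> 1"
proof -
  have "0 \<le> kf c - kf (-1)"
    by (rule has_integral_nonneg[OF kf_integral[of "-1" c]]) (use assms kp_range in auto)
  moreover have "0 \<le> kf 1 - kf c"
    by (rule has_integral_nonneg[OF kf_integral[of c 1]]) (use assms kp_range in auto)
  moreover have "kf (-1) = 0" "kf 1 = 1" by (auto simp: kf_def)
  ultimately show ?thesis by simp
qed


lemma lip_deriv:
  fixes f f' :: "real \<Rightarrow> real"
  assumes ab: "a \<le> b" and cont: "continuous_on {a..b} f"
    and der: "\<And>x. a < x \<Longrightarrow> x < b \<Longrightarrow> (f has_real_derivative f' x) (at x)"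
    and bd: "\<And>x. a < x \<Longrightarrow> x < b \<Longrightarrow> \<bar>f' x\<bar> \<le> M"
    and x: "x \<in> {a..b}" and y: "y \<in> {a..b}"
  shows "\<bar>f x - f y\<bar> \<le> M * \<bar>x - y\<bar>"
proof -
  have main: "\<bar>f v - f u\<bar> \<le> M * (v - u)" if uv: "u < v" "u \<in> {a..b}" "v \<in> {a..b}" for u v
  proof -
    have "continuous_on {u..v} f" using cont continuous_on_subset uv by fastforce
    moreover have "\<And>z. u < z \<Longrightarrow> z < v \<Longrightarrow> f differentiable (at z)"
    proof -
      fix z assume "u < z" "z < v"
      then have "a < z" "z < b" using uv by auto
      then show "f differentiable (at z)" using der real_differentiable_def by blast
    qed
    ultimately obtain l z where z: "u < z" "z < v" "DERIV f z :> l" "f v - f u = (v - u) * l"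
      using MVT[OF uv(1)] by blast
    have "l = f' z" using DERIV_unique[OF z(3) der[of z]] z uv by auto
    then have "\<bar>l\<bar> \<le> M" using bd[of z] z uv by auto
    then show ?thesis using z(4) uv(1) by (simp add: abs_mult mult.commute mult_right_mono)
  qed
  show ?thesis
  proof (cases x y rule: linorder_cases)
    case less then show ?thesis using main[of x y] x y by (simp add: abs_minus_commute)
  next
    case greater then show ?thesis using main[of y x] x y by simp
  qed simp
qed

lemma kf_lip: "c \<in> {-1..1} \<Longrightarrow> c' \<in> {-1..1} \<Longrightarrow> \<bar>kf c - kf c'\<bar> \<le> \<bar>c - c'\<bar>"
  using lip_deriv[of "-1" 1 kf kp 1 c c'] kf_cont kf_deriv_int kp_range by fastforce

lemma kfd_range: "c \<in> {-1..1} \<Longrightarrow> (kf^^j) c \<in> {-1..1}"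
proof (induction j)
  case (Suc j)
  then show ?case using kf_range[of "(kf^^j) c"] by auto
qed simp

lemma kfd_lip: "c \<in> {-1..1} \<Longrightarrow> c' \<in> {-1..1} \<Longrightarrow> \<bar>(kf^^j) c - (kf^^j) c'\<bar> \<le> \<bar>c - c'\<bar>"
proof (induction j)
  case (Suc j)
  then show ?case using kf_lip[OF kfd_range[of c j] kfd_range[of c' j]] by simp
qed simp

definition Fp :: "nat \<Rightarrow> real \<Rightarrow> real" where
  "Fp d c = (\<Prod>j<d. kp ((kf^^j) c))"

lemma kfd_deriv: "c \<in> {-1..1} \<Longrightarrow> ((kf^^d) has_real_derivative Fp d c) (at c within {-1..1})"
proof (induction d)
  case 0 then show ?case by (simp add: Fp_def id_def DERIV_ident)
next
  case (Suc d)
  have k: "(kf has_real_derivative kp ((kf^^d) c)) (at ((kf^^d) c) within ((kf^^d) ` {-1..1}))"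
    by (rule has_field_derivative_subset[OF kf_deriv]) (use kfd_range[OF Suc.prems, of d] kfd_range in auto)
  show ?case using DERIV_image_chain[OF k Suc.IH[OF Suc.prems]]
    by (simp add: Fp_def mult.commute comp_def)
qed

lemma Fp_range: "c \<in> {-1..1} \<Longrightarrow> 0 \<le> Fp d c \<and> Fp d c \<le> 1"
  unfolding Fp_def using kp_range kfd_range
  by (auto intro!: prod_nonneg prod_le_1)


lemma gmap_arccos: "c \<in> {-1..1} \<Longrightarrow> gmap (arccos c) = arccos (kf c)"
  by (simp add: gmap_def kf_def sin_arccos add.commute mult.commute)

lemma gmapd_arccos: "c \<in> {-1..1} \<Longrightarrow> (gmap^^j) (arccos c) = arccos ((kf^^j) c)"
proof (induction j)
  case (Suc j)
  then show ?case using gmap_arccos[OF kfd_range[OF Suc.prems, of j]] by simp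
qed simp

definition qf :: "real \<Rightarrow> real" where
  "qf t = ((pi - t) * cos t + sin t) / pi"

lemma gmap_qf: "gmap t = arccos (qf t)" by (simp add: gmap_def qf_def)

lemma qf_kf: "t \<in> {0..pi} \<Longrightarrow> qf t = kf (cos t)"
proof -
  assume t: "t \<in> {0..pi}"
  then have "arccos (cos t) = t" by (simp add: arccos_cos)
  moreover have "sin t = sqrt (1 - (cos t)\<^sup>2)"
    using t sin_ge_zero[of t] by (simp add: sin_squared_eq[symmetric] real_sqrt_unique)
  ultimately show ?thesis by (simp add: qf_def kf_def mult.commute add.commute)
qed

lemma qf_range: "t \<in> {0..pi} \<Longrightarrow> 0 \<le> qf t \<and> qf t \<le> 1"
  using qf_kf kf_range by simp

lemma qf_deriv: "(qf has_real_derivative (- ((pi - t) * sin t) / pi)) (at t)"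
  unfolding qf_def[abs_def]
  by (auto intro!: derivative_eq_intros simp: field_simps)

lemma qf_strict:
  assumes "0 < t" "t < pi"
  shows "0 < qf t \<and> qf t < 1"
proof -
  have neg: "\<exists>y. DERIV qf x :> y \<and> y < 0" if "0 < x" "x < pi" for x
    using qf_deriv[of x] that sin_gt_zero[of x] by (intro exI[of _ "- ((pi - x) * sin x) / pi"]) auto
  have npos: "\<exists>y. DERIV qf x :> y \<and> y \<le> 0" if "0 \<le> x" "x \<le> pi" for x
    using qf_deriv[of x] that sin_ge_zero[of x] by (intro exI[of _ "- ((pi - x) * sin x) / pi"]) auto
  have "qf t < qf (t/2)"
    by (rule DERIV_neg_imp_decreasing) (use assms neg in auto)
  moreover have "qf (t/2) \<le> qf 0"
    by (rule DERIV_nonpos_imp_nonincreasing) (use assms npos in auto)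
  moreover have "qf ((t + pi)/2) < qf t"
    by (rule DERIV_neg_imp_decreasing) (use assms neg in auto)
  moreover have "qf pi \<le> qf ((t + pi)/2)"
    by (rule DERIV_nonpos_imp_nonincreasing) (use assms npos in auto)
  moreover have "qf 0 = 1" "qf pi = 0" by (auto simp: qf_def)
  ultimately show ?thesis by linarith
qed

definition hh :: "real \<Rightarrow> real" where
  "hh t = (pi - t)\<^sup>2 + 2 * (pi - t) * sin t * cos t + (sin t)\<^sup>2"

lemma hh_deriv: "(hh has_real_derivative (- 4 * (pi - t) * (sin t)\<^sup>2)) (at t)"
proof -
  have "(hh has_real_derivative
     (2 * (pi - t) * (0 - 1) + ((2 * (0 - 1) * sin t + 2 * (pi - t) * cos t) * cos t + 2 * (pi - t) * sin t * (- sin t)) + 2 * sin t * cos t)) (at t)"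
    unfolding hh_def[abs_def]
    by (rule derivative_eq_intros refl | simp)+
  moreover have "(2 * (pi - t) * (0 - 1) + ((2 * (0 - 1) * sin t + 2 * (pi - t) * cos t) * cos t + 2 * (pi - t) * sin t * (- sin t)) + 2 * sin t * cos t)
     = - 4 * (pi - t) * (sin t)\<^sup>2"
    using sin_cos_squared_add[of t] by algebra
  ultimately show ?thesis by simp
qed

lemma hh_le: "t \<in> {0..pi} \<Longrightarrow> ((pi - t) * sin t)\<^sup>2 + (pi * qf t)\<^sup>2 \<le> pi\<^sup>2"
proof -
  assume t: "t \<in> {0..pi}"
  have "hh t \<le> hh 0"
  proof (rule DERIV_nonpos_imp_nonincreasing[of 0 t hh])
    fix x assume "0 \<le> x" "x \<le> t"
    then have "0 \<le> (pi - x) * (sin x)\<^sup>2" using t by auto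
    then have "- 4 * (pi - x) * (sin x)\<^sup>2 \<le> 0" by linarith
    then show "\<exists>y. DERIV hh x :> y \<and> y \<le> 0" using hh_deriv[of x] by (intro exI[of _ "- 4 * (pi - x) * (sin x)\<^sup>2"]) blast
  qed (use t in auto)
  moreover have "hh 0 = pi\<^sup>2" by (simp add: hh_def)
  moreover have "((pi - t) * sin t)\<^sup>2 + (pi * qf t)\<^sup>2 = hh t"
  proof -
    have "pi * qf t = (pi - t) * cos t + sin t" using pi_gt_zero by (simp add: qf_def)
    moreover have "((pi - t) * sin t)\<^sup>2 + ((pi - t) * cos t + sin t)\<^sup>2 = hh t"
      using sin_cos_squared_add[of t] unfolding hh_def by algebra
    ultimately show ?thesis by simp
  qed
  ultimately show ?thesis by simp
qed


lemma gmap_deriv: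
  assumes "0 < t" "t < pi"
  shows "\<exists>D. (gmap has_real_derivative D) (at t) \<and> \<bar>D\<bar> \<le> 1"
proof -
  have q: "0 < qf t" "qf t < 1" using qf_strict assms by auto
  define s where "s = sqrt (1 - (qf t)\<^sup>2)"
  have s2: "s\<^sup>2 = 1 - (qf t)\<^sup>2" using q by (simp add: s_def power_le_one)
  have "(qf t)\<^sup>2 < 1" using q by (simp add: abs_square_less_1)
  then have sp: "s > 0" unfolding s_def by simp
  have d: "(gmap has_real_derivative inverse (- s) * (- ((pi - t) * sin t) / pi)) (at t)"
    unfolding gmap_qf[abs_def] s_def
    by (rule DERIV_chain2[OF DERIV_arccos qf_deriv]) (use q in auto)
  have st: "0 \<le> sin t" using assms sin_ge_zero by auto
  have n: "0 \<le> (pi - t) * sin t" using st assms by auto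
  have "((pi - t) * sin t)\<^sup>2 \<le> (pi * s)\<^sup>2"
  proof -
    have "(pi * s)\<^sup>2 = pi\<^sup>2 * (1 - (qf t)\<^sup>2)" unfolding s2[symmetric] by (simp add: power_mult_distrib)
    also have "\<dots> = pi\<^sup>2 - (pi * qf t)\<^sup>2" by (simp add: power_mult_distrib right_diff_distrib)
    finally have "(pi * s)\<^sup>2 = pi\<^sup>2 - (pi * qf t)\<^sup>2" .
    then show ?thesis using hh_le[of t] assms by simp
  qed
  moreover have "0 \<le> pi * s" using sp by simp
  ultimately have le: "(pi - t) * sin t \<le> pi * s"
    by (rule power2_le_imp_le)
  have "inverse (- s) * (- ((pi - t) * sin t) / pi) = ((pi - t) * sin t) / (pi * s)"
    using sp by (simp add: field_simps)
  moreover have "\<bar>((pi - t) * sin t) / (pi * s)\<bar> \<le> 1"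
    using le n sp by (simp add: divide_le_eq_1)
  ultimately show ?thesis using d by metis
qed

lemma qf_cont: "continuous_on S qf"
  unfolding qf_def[abs_def] by (intro continuous_intros) auto

lemma gmap_cont: "continuous_on {0..pi} gmap"
  unfolding gmap_qf[abs_def]
proof (intro continuous_intros qf_cont ballI)
  fix t assume "t \<in> {0..pi}"
  then show "- 1 \<le> qf t \<and> qf t \<le> 1" using qf_range[of t] by auto
qed

lemma gmap_range: "t \<in> {0..pi} \<Longrightarrow> gmap t \<in> {0..pi}"
  unfolding gmap_qf using qf_range[of t] arccos_lbound arccos_ubound by auto

lemma gmap_lip:
  assumes "t \<in> {0..pi}" "t' \<in> {0..pi}"
  shows "\<bar>gmap t - gmap t'\<bar> \<le> \<bar>t - t'\<bar>"
proof -
  obtain D where D: "\<And>x. 0 < x \<Longrightarrow> x < pi \<Longrightarrow> (gmap has_real_derivative D x) (at x) \<and> \<bar>D x\<bar> \<le> 1"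
    using gmap_deriv by metis
  show ?thesis using lip_deriv[of 0 pi gmap D 1 t t'] D gmap_cont assms by auto
qed

lemma gmapd_range: "t \<in> {0..pi} \<Longrightarrow> (gmap^^j) t \<in> {0..pi}"
  by (induction j) (use gmap_range in auto)

lemma gmapd_lip: "t \<in> {0..pi} \<Longrightarrow> t' \<in> {0..pi} \<Longrightarrow> \<bar>(gmap^^j) t - (gmap^^j) t'\<bar> \<le> \<bar>t - t'\<bar>"
proof (induction j)
  case (Suc j)
  then show ?case using gmap_lip[OF gmapd_range[of t j] gmapd_range[of t' j]] by simp
qed simp

lemma prod_diff:
  fixes a b :: "nat \<Rightarrow> real"
  assumes "\<And>j. j < d \<Longrightarrow> 0 \<le> a j \<and> a j \<le> 1 \<and> 0 \<le> b j \<and> b j \<le> 1 \<and> \<bar>a j - b j\<bar> \<le> e"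
  shows "\<bar>(\<Prod>j<d. a j) - (\<Prod>j<d. b j)\<bar> \<le> real d * e"
  using assms
proof (induction d)
  case 0 then show ?case by simp
next
  case (Suc d)
  define A where "A = (\<Prod>j<d. a j)"
  define B where "B = (\<Prod>j<d. b j)"
  have IH: "\<bar>A - B\<bar> \<le> real d * e" using Suc by (simp add: A_def B_def)
  have A: "0 \<le> A \<and> A \<le> 1" using Suc.prems unfolding A_def by (auto intro!: prod_nonneg prod_le_1)
  have ad: "0 \<le> a d \<and> a d \<le> 1 \<and> 0 \<le> b d \<and> b d \<le> 1 \<and> \<bar>a d - b d\<bar> \<le> e" using Suc.prems by simp
  have "a d * A - b d * B = (a d - b d) * A + b d * (A - B)" by (simp add: algebra_simps)
  then have "\<bar>a d * A - b d * B\<bar> \<le> \<bar>a d - b d\<bar> * A + b d * \<bar>A - B\<bar>"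
    using A ad by (metis abs_mult abs_of_nonneg abs_triangle_ineq)
  also have "\<dots> \<le> e * 1 + 1 * (real d * e)"
    using A ad IH by (intro add_mono mult_mono) auto
  finally show ?case by (simp add: A_def B_def algebra_simps)
qed

lemma Fp_arccos: "c \<in> {-1..1} \<Longrightarrow> Fp d c = (\<Prod>j<d. (pi - (gmap^^j) (arccos c)) / pi)"
  unfolding Fp_def kp_def using gmapd_arccos by simp

lemma Fp_lip:
  assumes "c \<in> {-1..1}" "c' \<in> {-1..1}"
  shows "\<bar>Fp d c - Fp d c'\<bar> \<le> real d * \<bar>arccos c - arccos c'\<bar>"
proof -
  have r: "arccos c \<in> {0..pi}" "arccos c' \<in> {0..pi}"
    using assms arccos_lbound arccos_ubound by auto
  have "\<bar>Fp d c - Fp d c'\<bar> \<le> real d * \<bar>arccos c - arccos c'\<bar>"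
    unfolding Fp_arccos[OF assms(1)] Fp_arccos[OF assms(2)]
  proof (rule prod_diff)
    fix j
    have g: "(gmap^^j) (arccos c) \<in> {0..pi}" "(gmap^^j) (arccos c') \<in> {0..pi}"
      using gmapd_range r by auto
    have l: "\<bar>(gmap^^j) (arccos c) - (gmap^^j) (arccos c')\<bar> \<le> \<bar>arccos c - arccos c'\<bar>"
      using gmapd_lip r by auto
    have "\<bar>(pi - (gmap^^j) (arccos c)) / pi - (pi - (gmap^^j) (arccos c')) / pi\<bar>
       = \<bar>(gmap^^j) (arccos c) - (gmap^^j) (arccos c')\<bar> / pi"
      by (simp add: diff_divide_distrib[symmetric] abs_minus_commute)
    also have "\<dots> \<le> \<bar>(gmap^^j) (arccos c) - (gmap^^j) (arccos c')\<bar>"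
      using pi_gt3 by (simp add: divide_le_eq mult_le_cancel_left1)
    finally show "0 \<le> (pi - (gmap^^j) (arccos c)) / pi \<and> (pi - (gmap^^j) (arccos c)) / pi \<le> 1 \<and>
          0 \<le> (pi - (gmap^^j) (arccos c')) / pi \<and> (pi - (gmap^^j) (arccos c')) / pi \<le> 1 \<and>
          \<bar>(pi - (gmap^^j) (arccos c)) / pi - (pi - (gmap^^j) (arccos c')) / pi\<bar> \<le> \<bar>arccos c - arccos c'\<bar>"
      using g l by auto
  qed
  then show ?thesis .
qed



lemma cos_lower: "0 \<le> x \<Longrightarrow> 1 - x\<^sup>2 / 2 \<le> cos (x::real)"
proof -
  assume x: "0 \<le> x"
  have "(\<lambda>x. cos x - 1 + x\<^sup>2/2) 0 \<le> (\<lambda>x. cos x - 1 + x\<^sup>2/2) x"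
  proof (rule DERIV_nonneg_imp_nondecreasing[OF x])
    fix y :: real assume "0 \<le> y" "y \<le> x"
    then have "0 \<le> y - sin y" using sin_x_le_x[of y] by simp
    moreover have "((\<lambda>x. cos x - 1 + x\<^sup>2/2) has_real_derivative (y - sin y)) (at y)"
      by (auto intro!: derivative_eq_intros)
    ultimately show "\<exists>d. ((\<lambda>x. cos x - 1 + x\<^sup>2/2) has_real_derivative d) (at y) \<and> 0 \<le> d"
      by blast
  qed
  then show ?thesis by simp
qed

lemma sin_lower: "0 \<le> x \<Longrightarrow> x - x ^ 3 / 6 \<le> sin (x::real)"
proof -
  assume x: "0 \<le> x"
  have "(\<lambda>x. sin x - x + x ^ 3 / 6) 0 \<le> (\<lambda>x. sin x - x + x ^ 3 / 6) x"
  proof (rule DERIV_nonneg_imp_nondecreasing[OF x])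
    fix y :: real assume "0 \<le> y" "y \<le> x"
    then have "0 \<le> cos y - 1 + y\<^sup>2 / 2" using cos_lower[of y] by simp
    moreover have "((\<lambda>x. sin x - x + x ^ 3 / 6) has_real_derivative (cos y - 1 + y\<^sup>2 / 2)) (at y)"
      by (auto intro!: derivative_eq_intros)
    ultimately show "\<exists>d. ((\<lambda>x. sin x - x + x ^ 3 / 6) has_real_derivative d) (at y) \<and> 0 \<le> d"
      by blast
  qed
  then show ?thesis by simp
qed

lemma angle_bound:
  assumes "\<bar>t\<bar> \<le> pi"
  shows "t\<^sup>2 \<le> 9 * (2 - 2 * cos (t::real))"
proof -
  have main: "t\<^sup>2 \<le> 9 * (2 - 2 * cos t)" if t: "0 \<le> t" "t \<le> pi" for t :: real
  proof -
    define s where "s = t / 2"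
    have s: "0 \<le> s" "s \<le> 2" using t pi_less_4 by (auto simp: s_def)
    have "s ^ 3 / 6 \<le> 2 * s / 3"
    proof -
      have "s ^ 3 = s * s\<^sup>2" by (simp add: power3_eq_cube power2_eq_square)
      also have "\<dots> \<le> s * 2\<^sup>2" using s by (intro mult_left_mono power_mono) auto
      finally show ?thesis by simp
    qed
    then have ss: "s / 3 \<le> sin s" using sin_lower[OF s(1)] by simp
    then have "(s/3)\<^sup>2 \<le> (sin s)\<^sup>2" using s by (intro power_mono) auto
    moreover have "cos t = 1 - 2 * (sin s)\<^sup>2" using cos_double_sin[of s] by (simp add: s_def)
    moreover have "t = 2 * s" by (simp add: s_def)
    ultimately show ?thesis by (simp add: power_mult_distrib power_divide)
  qed
  show ?thesis
  proof (cases "0 \<le> t")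
    case True then show ?thesis using main assms by auto
  next
    case False then show ?thesis using main[of "-t"] assms by auto
  qed
qed

lemma vn: "vnorm n x = L2_set x {..<n}" by (simp add: vnorm_def L2_set_def)

lemma vn_nonneg [simp]: "0 \<le> vnorm n x" by (simp add: vn)

lemma vn_sq: "(vnorm n x)\<^sup>2 = (\<Sum>i<n. (x i)\<^sup>2)"
  by (simp add: vnorm_def sum_nonneg)

lemma vn_tri: "vnorm n (\<lambda>i. x i + y i) \<le> vnorm n x + vnorm n y"
  unfolding vn by (rule L2_set_triangle_ineq)

lemma vn_neg: "vnorm n (\<lambda>i. - x i) = vnorm n x"
  by (simp add: vnorm_def)

lemma vn_scale: "vnorm n (\<lambda>i. c * x i) = \<bar>c\<bar> * vnorm n x"
  by (simp add: vnorm_def power_mult_distrib sum_distrib_left[symmetric] real_sqrt_mult)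

lemma vn_tri_sub: "vnorm n (\<lambda>i. x i - y i) \<le> vnorm n x + vnorm n y"
  using vn_tri[of n x "\<lambda>i. - y i"] vn_neg[of n y] by simp

lemma vn_sub_comm: "vnorm n (\<lambda>i. x i - y i) = vnorm n (\<lambda>i. y i - x i)"
  using vn_neg[of n "\<lambda>i. x i - y i"] by simp

lemma vn_coord: "i < n \<Longrightarrow> \<bar>x i\<bar> \<le> vnorm n x"
proof -
  assume i: "i < n"
  have "\<bar>x i\<bar> \<le> L2_set (\<lambda>j. \<bar>x j\<bar>) {..<n}" using i by (intro member_le_L2_set) auto
  also have "\<dots> = vnorm n x" by (simp add: vnorm_def L2_set_def)
  finally show ?thesis .
qed

lemma vn_rev: "\<bar>vnorm n x - vnorm n y\<bar> \<le> vnorm n (\<lambda>i. x i - y i)"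
proof -
  have "vnorm n x \<le> vnorm n (\<lambda>i. x i - y i) + vnorm n y"
    using vn_tri[of n "\<lambda>i. x i - y i" y] by simp
  moreover have "vnorm n y \<le> vnorm n (\<lambda>i. y i - x i) + vnorm n x"
    using vn_tri[of n "\<lambda>i. y i - x i" x] by simp
  ultimately show ?thesis using vn_sub_comm[of n x y] by linarith
qed

lemma vn_zero: "vnorm n x = 0 \<Longrightarrow> i < n \<Longrightarrow> x i = 0"
  using vn_coord[of i n x] by simp

lemma vinner_cs: "\<bar>vinner n x y\<bar> \<le> vnorm n x * vnorm n y"
proof -
  have "\<bar>vinner n x y\<bar> \<le> (\<Sum>i<n. \<bar>x i\<bar> * \<bar>y i\<bar>)"
    unfolding vinner_def by (rule order_trans[OF sum_abs]) (simp add: abs_mult)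
  also have "\<dots> \<le> vnorm n x * vnorm n y" unfolding vn by (rule L2_set_mult_ineq)
  finally show ?thesis .
qed

lemma L2_sub_comm: "L2_set (\<lambda>i. x i - y i) A = L2_set (\<lambda>i. y i - x i) A"
  by (simp add: L2_set_def power2_commute)

lemma angle_lip:
  assumes n: "1 \<le> n" and u: "vnorm n u = 1" and w: "vnorm n w = 1"
  shows "\<bar>arccos (u 0) - arccos (w 0)\<bar> \<le> 3 * vnorm n (\<lambda>i. u i - w i)"
proof -
  define A where "A = {1..<n}"
  have split: "\<And>f::nat\<Rightarrow>real. (\<Sum>i<n. f i) = f 0 + (\<Sum>i\<in>A. f i)"
  proof -
    fix f :: "nat \<Rightarrow> real"
    have "{..<n} = insert 0 A" using n by (auto simp: A_def)
    then show "(\<Sum>i<n. f i) = f 0 + (\<Sum>i\<in>A. f i)" by (simp add: A_def)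
  qed
  have L2sq: "\<And>f. (L2_set f A)\<^sup>2 = (\<Sum>i\<in>A. (f i)\<^sup>2)"
    by (simp add: L2_set_def sum_nonneg)
  have u0: "\<bar>u 0\<bar> \<le> 1" "\<bar>w 0\<bar> \<le> 1" using vn_coord[of 0 n u] vn_coord[of 0 n w] n u w by auto
  have uA: "L2_set u A = sin (arccos (u 0))"
  proof -
    have "1 = (u 0)\<^sup>2 + (\<Sum>i\<in>A. (u i)\<^sup>2)" using vn_sq[of n u] u split by simp
    then have "(L2_set u A)\<^sup>2 = 1 - (u 0)\<^sup>2" using L2sq by simp
    then have "L2_set u A = sqrt (1 - (u 0)\<^sup>2)" by (metis L2_set_nonneg real_sqrt_unique)
    then show ?thesis using u0 by (simp add: sin_arccos)
  qed
  have wA: "L2_set w A = sin (arccos (w 0))"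
  proof -
    have "1 = (w 0)\<^sup>2 + (\<Sum>i\<in>A. (w i)\<^sup>2)" using vn_sq[of n w] w split by simp
    then have "(L2_set w A)\<^sup>2 = 1 - (w 0)\<^sup>2" using L2sq by simp
    then have "L2_set w A = sqrt (1 - (w 0)\<^sup>2)" by (metis L2_set_nonneg real_sqrt_unique)
    then show ?thesis using u0 by (simp add: sin_arccos)
  qed
  define th where "th = arccos (u 0)"
  define ph where "ph = arccos (w 0)"
  define D where "D = vnorm n (\<lambda>i. u i - w i)"
  have rev: "\<bar>L2_set u A - L2_set w A\<bar> \<le> L2_set (\<lambda>i. u i - w i) A"
  proof -
    have "L2_set u A \<le> L2_set (\<lambda>i. u i - w i) A + L2_set w A"
      using L2_set_triangle_ineq[of "\<lambda>i. u i - w i" w A] by simp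
    moreover have "L2_set w A \<le> L2_set (\<lambda>i. w i - u i) A + L2_set u A"
      using L2_set_triangle_ineq[of "\<lambda>i. w i - u i" u A] by simp
    ultimately show ?thesis using L2_sub_comm[of w u A] by linarith
  qed
  have "D\<^sup>2 = (u 0 - w 0)\<^sup>2 + (L2_set (\<lambda>i. u i - w i) A)\<^sup>2"
    unfolding D_def vn_sq L2sq by (rule split)
  also have "\<dots> \<ge> (cos th - cos ph)\<^sup>2 + (sin th - sin ph)\<^sup>2"
  proof -
    have "(sin th - sin ph)\<^sup>2 \<le> (L2_set (\<lambda>i. u i - w i) A)\<^sup>2"
      using rev uA wA unfolding th_def ph_def by (simp add: power2_le_iff_abs_le abs_le_iff)
    moreover have "cos th = u 0" "cos ph = w 0" using u0 by (auto simp: th_def ph_def)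
    ultimately show ?thesis by simp
  qed
  finally have D2: "(cos th - cos ph)\<^sup>2 + (sin th - sin ph)\<^sup>2 \<le> D\<^sup>2" .
  have "(cos th - cos ph)\<^sup>2 + (sin th - sin ph)\<^sup>2 = 2 - 2 * cos (th - ph)"
    using sin_cos_squared_add[of th] sin_cos_squared_add[of ph] unfolding cos_diff
    by (simp add: power2_eq_square algebra_simps)
  moreover have "\<bar>th - ph\<bar> \<le> pi"
    using u0 arccos_lbound arccos_ubound unfolding th_def ph_def by (smt (verit, best) abs_le_iff)
  ultimately have "(th - ph)\<^sup>2 \<le> 9 * (2 - 2 * cos (th - ph))" "2 - 2 * cos (th - ph) \<le> D\<^sup>2"
    using angle_bound[of "th - ph"] D2 by auto
  then have "(th - ph)\<^sup>2 \<le> 9 * D\<^sup>2" by (meson order_trans mult_left_mono zero_le_numeral)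
  then have "(th - ph)\<^sup>2 \<le> (3 * D)\<^sup>2" by (simp add: power_mult_distrib)
  then have "\<bar>th - ph\<bar> \<le> 3 * D" using D_def by (intro power2_le_imp_le[of "\<bar>th - ph\<bar>"]) auto
  then show ?thesis by (simp add: th_def ph_def D_def)
qed



lemma Rn_vadd: "x \<in> Rn n \<Longrightarrow> h \<in> Rn n \<Longrightarrow> vadd x h \<in> Rn n"
  by (simp add: Rn_def vadd_def)

lemma vinner_add: "vinner n (\<lambda>i. G i + H i) h = vinner n G h + vinner n H h"
  by (simp add: vinner_def sum.distrib distrib_right)

lemma vinner_scale: "vinner n (\<lambda>i. c * G i) h = c * vinner n G h"
  by (simp add: vinner_def sum_distrib_left mult.assoc)

lemma has_grad_cong: "has_grad n f G x \<Longrightarrow> (\<And>y. f y = f' y) \<Longrightarrow> G = G' \<Longrightarrow> has_grad n f' G' x"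
proof -
  assume "has_grad n f G x" "\<And>y. f y = f' y" "G = G'"
  moreover then have "f = f'" by auto
  ultimately show ?thesis by simp
qed

lemma has_grad_add:
  assumes f: "has_grad n f G x" and g: "has_grad n g H x"
  shows "has_grad n (\<lambda>y. f y + g y) (\<lambda>i. G i + H i) x"
  unfolding has_grad_def
proof (intro conjI allI impI)
  show "(\<lambda>i. G i + H i) \<in> Rn n" using f g by (simp add: has_grad_def Rn_def)
  fix e :: real assume e: "0 < e"
  obtain d1 where d1: "d1 > 0" "\<forall>h\<in>Rn n. vnorm n h < d1 \<longrightarrow> \<bar>f (vadd x h) - f x - vinner n G h\<bar> \<le> e/2 * vnorm n h"
    using f e unfolding has_grad_def by (meson half_gt_zero)
  obtain d2 where d2: "d2 > 0" "\<forall>h\<in>Rn n. vnorm n h < d2 \<longrightarrow> \<bar>g (vadd x h) - g x - vinner n H h\<bar> \<le> e/2 * vnorm n h"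
    using g e unfolding has_grad_def by (meson half_gt_zero)
  show "\<exists>\<delta>>0. \<forall>h\<in>Rn n. vnorm n h < \<delta> \<longrightarrow>
        \<bar>f (vadd x h) + g (vadd x h) - (f x + g x) - vinner n (\<lambda>i. G i + H i) h\<bar> \<le> e * vnorm n h"
  proof (intro exI[of _ "min d1 d2"] conjI ballI impI)
    fix h assume h: "h \<in> Rn n" "vnorm n h < min d1 d2"
    have "\<bar>f (vadd x h) + g (vadd x h) - (f x + g x) - vinner n (\<lambda>i. G i + H i) h\<bar>
       \<le> \<bar>f (vadd x h) - f x - vinner n G h\<bar> + \<bar>g (vadd x h) - g x - vinner n H h\<bar>"
      unfolding vinner_add by linarith
    also have "\<dots> \<le> e/2 * vnorm n h + e/2 * vnorm n h" using d1 d2 h by (intro add_mono) auto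
    finally show "\<bar>f (vadd x h) + g (vadd x h) - (f x + g x) - vinner n (\<lambda>i. G i + H i) h\<bar> \<le> e * vnorm n h"
      by simp
  qed (use d1 d2 in auto)
qed

lemma has_grad_const: "has_grad n (\<lambda>_. c) (\<lambda>_. 0) x"
  by (auto simp: has_grad_def Rn_def vinner_def)

lemma has_grad_coord0: "1 \<le> n \<Longrightarrow> has_grad n (\<lambda>y. y 0) e1 x"
proof -
  assume n: "1 \<le> n"
  have "vinner n e1 h = h 0" for h
  proof -
    have "vinner n e1 h = (\<Sum>i<n. if i = 0 then h i else 0)" unfolding vinner_def e1_def
      by (intro sum.cong) auto
    also have "\<dots> = h 0" using n by (simp add: sum.delta)
    finally show ?thesis .
  qed
  then show ?thesis using n by (auto simp: has_grad_def Rn_def e1_def vadd_def intro: exI[of _ 1])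
qed

lemma has_grad_N:
  assumes x: "x \<in> Rn n"
  shows "has_grad n (\<lambda>y. \<Sum>i<n. (y i)\<^sup>2) (\<lambda>i. 2 * x i) x"
  unfolding has_grad_def
proof (intro conjI allI impI)
  show "(\<lambda>i. 2 * x i) \<in> Rn n" using x by (simp add: Rn_def)
  fix e :: real assume e: "0 < e"
  show "\<exists>\<delta>>0. \<forall>h\<in>Rn n. vnorm n h < \<delta> \<longrightarrow>
        \<bar>(\<Sum>i<n. (vadd x h i)\<^sup>2) - (\<Sum>i<n. (x i)\<^sup>2) - vinner n (\<lambda>i. 2 * x i) h\<bar> \<le> e * vnorm n h"
  proof (intro exI[of _ e] conjI ballI impI)
    fix h assume h: "h \<in> Rn n" "vnorm n h < e"
    have "(\<Sum>i<n. (vadd x h i)\<^sup>2) - (\<Sum>i<n. (x i)\<^sup>2) - vinner n (\<lambda>i. 2 * x i) h = (\<Sum>i<n. (h i)\<^sup>2)"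
      unfolding vinner_def vadd_def sum_subtractf[symmetric]
      by (intro sum.cong) (auto simp: power2_eq_square algebra_simps)
    also have "\<dots> = vnorm n h * vnorm n h" using vn_sq[of n h] by (simp add: power2_eq_square)
    finally show "\<bar>(\<Sum>i<n. (vadd x h i)\<^sup>2) - (\<Sum>i<n. (x i)\<^sup>2) - vinner n (\<lambda>i. 2 * x i) h\<bar> \<le> e * vnorm n h"
      using h by (simp add: mult_right_mono)
  qed (use e in auto)
qed

lemma has_grad_bound:
  assumes g: "has_grad n f G x"
  shows "\<exists>\<delta>>0. \<forall>h\<in>Rn n. vnorm n h < \<delta> \<longrightarrow> \<bar>f (vadd x h) - f x\<bar> \<le> (vnorm n G + 1) * vnorm n h"
proof -
  obtain d where d: "d > 0" "\<forall>h\<in>Rn n. vnorm n h < d \<longrightarrow> \<bar>f (vadd x h) - f x - vinner n G h\<bar> \<le> 1 * vnorm n h"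
    using g unfolding has_grad_def by (meson zero_less_one)
  show ?thesis
  proof (intro exI[of _ d] conjI ballI impI)
    fix h assume h: "h \<in> Rn n" "vnorm n h < d"
    have "\<bar>f (vadd x h) - f x\<bar> \<le> \<bar>f (vadd x h) - f x - vinner n G h\<bar> + \<bar>vinner n G h\<bar>" by linarith
    also have "\<dots> \<le> 1 * vnorm n h + vnorm n G * vnorm n h" using d h vinner_cs[of n G h] by (intro add_mono) auto
    finally show "\<bar>f (vadd x h) - f x\<bar> \<le> (vnorm n G + 1) * vnorm n h" by (simp add: algebra_simps)
  qed (use d in auto)
qed

lemma deriv_est:
  assumes "(\<phi> has_real_derivative D) (at z0 within S)" "0 < e"
  shows "\<exists>\<rho>>0. \<forall>z\<in>S. \<bar>z - z0\<bar> < \<rho> \<longrightarrow> \<bar>\<phi> z - \<phi> z0 - D * (z - z0)\<bar> \<le> e * \<bar>z - z0\<bar>"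
proof -
  have "((\<lambda>y. (\<phi> y - \<phi> z0) / (y - z0)) \<longlongrightarrow> D) (at z0 within S)"
    using assms(1) has_field_derivative_iff by blast
  from tendstoD[OF this assms(2)] obtain \<rho> where r: "\<rho> > 0"
    "\<forall>z\<in>S. z \<noteq> z0 \<and> dist z z0 < \<rho> \<longrightarrow> dist ((\<phi> z - \<phi> z0) / (z - z0)) D < e"
    unfolding eventually_at by blast
  show ?thesis
  proof (intro exI[of _ \<rho>] conjI ballI impI)
    fix z assume z: "z \<in> S" "\<bar>z - z0\<bar> < \<rho>"
    show "\<bar>\<phi> z - \<phi> z0 - D * (z - z0)\<bar> \<le> e * \<bar>z - z0\<bar>"
    proof (cases "z = z0")
      case False
      then have "\<bar>(\<phi> z - \<phi> z0) / (z - z0) - D\<bar> < e" using r z by (auto simp: dist_real_def)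
      moreover have "\<phi> z - \<phi> z0 - D * (z - z0) = ((\<phi> z - \<phi> z0) / (z - z0) - D) * (z - z0)"
        using False by (simp add: field_simps)
      ultimately show ?thesis by (simp add: abs_mult mult_right_mono)
    qed simp
  qed (use r in auto)
qed

lemma has_grad_chain:
  assumes phi: "(\<phi> has_real_derivative D) (at (f x) within S)"
    and fS: "\<And>y. y \<in> Rn n \<Longrightarrow> f y \<in> S" and x: "x \<in> Rn n" and g: "has_grad n f G x"
  shows "has_grad n (\<lambda>y. \<phi> (f y)) (\<lambda>i. D * G i) x"
  unfolding has_grad_def
proof (intro conjI allI impI)
  show "(\<lambda>i. D * G i) \<in> Rn n" using g by (simp add: has_grad_def Rn_def)
  fix e :: real assume e: "0 < e"
  define M where "M = vnorm n G + 1"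
  have M: "M > 0" by (simp add: M_def add_nonneg_pos)
  obtain d0 where d0: "d0 > 0" "\<forall>h\<in>Rn n. vnorm n h < d0 \<longrightarrow> \<bar>f (vadd x h) - f x\<bar> \<le> M * vnorm n h"
    using has_grad_bound[OF g] unfolding M_def by blast
  obtain \<rho> where r: "\<rho> > 0" "\<forall>z\<in>S. \<bar>z - f x\<bar> < \<rho> \<longrightarrow> \<bar>\<phi> z - \<phi> (f x) - D * (z - f x)\<bar> \<le> (e / (2 * M)) * \<bar>z - f x\<bar>"
    using deriv_est[OF phi, of "e / (2 * M)"] e M by auto
  have e2: "e / (2 * (\<bar>D\<bar> + 1)) > 0" using e by (simp add: add_nonneg_pos)
  obtain d2 where d2: "d2 > 0" "\<forall>h\<in>Rn n. vnorm n h < d2 \<longrightarrow> \<bar>f (vadd x h) - f x - vinner n G h\<bar> \<le> e / (2 * (\<bar>D\<bar> + 1)) * vnorm n h"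
    using g e2 unfolding has_grad_def by blast
  show "\<exists>\<delta>>0. \<forall>h\<in>Rn n. vnorm n h < \<delta> \<longrightarrow>
        \<bar>\<phi> (f (vadd x h)) - \<phi> (f x) - vinner n (\<lambda>i. D * G i) h\<bar> \<le> e * vnorm n h"
  proof (intro exI[of _ "min d0 (min d2 (\<rho> / M))"] conjI ballI impI)
    fix h assume h: "h \<in> Rn n" "vnorm n h < min d0 (min d2 (\<rho> / M))"
    define z where "z = f (vadd x h)"
    have zS: "z \<in> S" unfolding z_def using fS Rn_vadd[OF x h(1)] .
    have zb: "\<bar>z - f x\<bar> \<le> M * vnorm n h" using d0 h unfolding z_def by auto
    also have "\<dots> < \<rho>" using h M by (simp add: less_divide_eq mult.commute)
    finally have zr: "\<bar>z - f x\<bar> < \<rho>" .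
    have A: "\<bar>\<phi> z - \<phi> (f x) - D * (z - f x)\<bar> \<le> e / 2 * vnorm n h"
    proof -
      have "\<bar>\<phi> z - \<phi> (f x) - D * (z - f x)\<bar> \<le> (e / (2 * M)) * \<bar>z - f x\<bar>" using r zS zr by auto
      also have "\<dots> \<le> (e / (2 * M)) * (M * vnorm n h)" using zb e M by (intro mult_left_mono) auto
      also have "\<dots> = e / 2 * vnorm n h" using M by (simp add: field_simps)
      finally show ?thesis .
    qed
    have B: "\<bar>D\<bar> * \<bar>z - f x - vinner n G h\<bar> \<le> e / 2 * vnorm n h"
    proof -
      have "\<bar>D\<bar> * \<bar>z - f x - vinner n G h\<bar> \<le> \<bar>D\<bar> * (e / (2 * (\<bar>D\<bar> + 1)) * vnorm n h)"
        using d2 h unfolding z_def by (intro mult_left_mono) auto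
      also have "\<dots> \<le> (\<bar>D\<bar> + 1) * (e / (2 * (\<bar>D\<bar> + 1)) * vnorm n h)"
        using e by (intro mult_right_mono) auto
      also have "\<dots> = e / 2 * vnorm n h" by (simp add: field_simps add_nonneg_pos)
      finally show ?thesis .
    qed
    have "\<phi> z - \<phi> (f x) - vinner n (\<lambda>i. D * G i) h = (\<phi> z - \<phi> (f x) - D * (z - f x)) + D * (z - f x - vinner n G h)"
      unfolding vinner_scale by (simp add: algebra_simps)
    then have "\<bar>\<phi> z - \<phi> (f x) - vinner n (\<lambda>i. D * G i) h\<bar> \<le> \<bar>\<phi> z - \<phi> (f x) - D * (z - f x)\<bar> + \<bar>D\<bar> * \<bar>z - f x - vinner n G h\<bar>"
      by (simp add: abs_mult[symmetric] abs_triangle_ineq)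
    also have "\<dots> \<le> e * vnorm n h" using A B by simp
    finally show "\<bar>\<phi> (f (vadd x h)) - \<phi> (f x) - vinner n (\<lambda>i. D * G i) h\<bar> \<le> e * vnorm n h"
      unfolding z_def .
  qed (use d0 d2 r M in auto)
qed

lemma has_grad_cmul:
  assumes "x \<in> Rn n" "has_grad n f G x"
  shows "has_grad n (\<lambda>y. c * f y) (\<lambda>i. c * G i) x"
  using has_grad_chain[of "\<lambda>t. c * t" c "f" x UNIV n G] assms
  by (auto intro!: derivative_eq_intros)

lemma has_grad_mult:
  assumes x: "x \<in> Rn n" and f: "has_grad n f G x" and g: "has_grad n g H x"
  shows "has_grad n (\<lambda>y. f y * g y) (\<lambda>i. f x * H i + g x * G i) x"
proof -
  have s1: "has_grad n (\<lambda>y. f y + g y) (\<lambda>i. G i + H i) x" by (rule has_grad_add[OF f g])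
  have s2: "has_grad n (\<lambda>y. f y + (-1) * g y) (\<lambda>i. G i + (-1) * H i) x"
    by (rule has_grad_add[OF f has_grad_cmul[OF x g]])
  have sq: "\<And>z. ((\<lambda>t. t\<^sup>2) has_real_derivative 2 * z) (at z within UNIV)"
    by (auto intro!: derivative_eq_intros)
  have q1: "has_grad n (\<lambda>y. (f y + g y)\<^sup>2) (\<lambda>i. 2 * (f x + g x) * (G i + H i)) x"
    using has_grad_chain[OF sq _ x s1] by simp
  have q2: "has_grad n (\<lambda>y. (f y + (-1) * g y)\<^sup>2) (\<lambda>i. 2 * (f x + (-1) * g x) * (G i + (-1) * H i)) x"
    using has_grad_chain[OF sq _ x s2] by simp
  have "has_grad n (\<lambda>y. (1/4) * ((f y + g y)\<^sup>2 + (-1) * (f y + (-1) * g y)\<^sup>2))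
          (\<lambda>i. (1/4) * (2 * (f x + g x) * (G i + H i) + (-1) * (2 * (f x + (-1) * g x) * (G i + (-1) * H i)))) x"
    by (rule has_grad_cmul[OF x has_grad_add[OF q1 has_grad_cmul[OF x q2]]])
  then show ?thesis
    by (rule has_grad_cong) (auto simp: power2_eq_square algebra_simps)
qed

lemma has_grad_unique:
  assumes f1: "has_grad n f G x" and f2: "has_grad n f G' x"
  shows "G = G'"
proof -
  define w where "w = (\<lambda>i. G i - G' i)"
  have wR: "w \<in> Rn n" using f1 f2 by (simp add: has_grad_def Rn_def w_def)
  have "vnorm n w = 0"
  proof (rule ccontr)
    assume "vnorm n w \<noteq> 0"
    then have wp: "vnorm n w > 0" using vn_nonneg[of n w] by linarith
    define e where "e = vnorm n w / 4"
    have e: "e > 0" using wp by (simp add: e_def)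
    obtain d1 where d1: "d1 > 0" "\<forall>h\<in>Rn n. vnorm n h < d1 \<longrightarrow> \<bar>f (vadd x h) - f x - vinner n G h\<bar> \<le> e * vnorm n h"
      using f1 e unfolding has_grad_def by blast
    obtain d2 where d2: "d2 > 0" "\<forall>h\<in>Rn n. vnorm n h < d2 \<longrightarrow> \<bar>f (vadd x h) - f x - vinner n G' h\<bar> \<le> e * vnorm n h"
      using f2 e unfolding has_grad_def by blast
    define t where "t = min d1 d2 / (2 * vnorm n w)"
    have t: "t > 0" using d1 d2 wp by (simp add: t_def)
    define h where "h = (\<lambda>i. t * w i)"
    have hR: "h \<in> Rn n" using wR by (simp add: h_def Rn_def)
    have hn: "vnorm n h = t * vnorm n w" unfolding h_def vn_scale using t by simp
    have "t * vnorm n w = min d1 d2 / 2" using wp by (simp add: t_def)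
    then have hs: "vnorm n h < d1" "vnorm n h < d2" using hn d1 d2 by auto
    have "vinner n G h - vinner n G' h = t * (vnorm n w)\<^sup>2"
      unfolding vinner_def h_def vn_sq sum_subtractf[symmetric] sum_distrib_left w_def
      by (intro sum.cong) (auto simp: power2_eq_square algebra_simps)
    moreover have "\<bar>vinner n G h - vinner n G' h\<bar> \<le> 2 * e * vnorm n h"
      using d1(2) d2(2) hR hs by fastforce
    ultimately have "t * (vnorm n w)\<^sup>2 \<le> 2 * (vnorm n w / 4) * (t * vnorm n w)"
      using t unfolding e_def hn by simp
    then have "t * (vnorm n w)\<^sup>2 \<le> (t * (vnorm n w)\<^sup>2) / 2" by (simp add: power2_eq_square)
    moreover have "t * (vnorm n w)\<^sup>2 > 0" using t wp by simp
    ultimately show False by linarith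
  qed
  then have "\<And>i. i < n \<Longrightarrow> w i = 0" using vn_zero by blast
  then have a: "\<And>i. i < n \<Longrightarrow> G i = G' i" unfolding w_def by simp
  have b: "\<And>i. n \<le> i \<Longrightarrow> G i = G' i" using f1 f2 unfolding has_grad_def Rn_def by simp
  show ?thesis
  proof
    fix i show "G i = G' i" using a b by (cases "i < n") auto
  qed
qed



definition NN :: "nat \<Rightarrow> (nat \<Rightarrow> real) \<Rightarrow> real" where "NN n y = (\<Sum>i<n. (y i)\<^sup>2)"
definition RR :: "nat \<Rightarrow> (nat \<Rightarrow> real) \<Rightarrow> real" where "RR n y = sqrt (NN n y)"
definition CC :: "nat \<Rightarrow> (nat \<Rightarrow> real) \<Rightarrow> real" where "CC n y = y 0 * inverse (RR n y)"

lemma RR_vnorm: "RR n y = vnorm n y" by (simp add: RR_def NN_def vnorm_def)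

lemma NN_nonneg: "0 \<le> NN n y" by (simp add: NN_def sum_nonneg)

lemma CC_range:
  assumes "1 \<le> n" shows "CC n y \<in> {-1..1}"
proof (cases "RR n y = 0")
  case True then show ?thesis by (simp add: CC_def)
next
  case False
  have nn: "0 \<le> RR n y" unfolding RR_vnorm by simp
  then have p: "RR n y > 0" using False by linarith
  have "\<bar>y 0\<bar> \<le> vnorm n y" using assms by (intro vn_coord) simp
  then have c: "\<bar>y 0\<bar> \<le> RR n y" unfolding RR_vnorm .
  have "\<bar>y 0 * inverse (RR n y)\<bar> = \<bar>y 0\<bar> / RR n y" using p by (simp add: abs_mult divide_inverse)
  also have "\<dots> \<le> 1" using c p by simp
  finally show ?thesis unfolding CC_def by (simp add: abs_le_iff)
qed

lemma vinner_e1: "1 \<le> n \<Longrightarrow> vinner n y e1 = y 0"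
proof -
  assume n: "1 \<le> n"
  have "vinner n y e1 = (\<Sum>i<n. if i = 0 then y i else 0)" unfolding vinner_def e1_def
    by (intro sum.cong) auto
  also have "\<dots> = y 0" using n by (simp add: sum.delta)
  finally show ?thesis .
qed

lemma loss_eq:
  assumes n: "1 \<le> n"
  shows "loss d n y = (1/2) * NN n y + ((-1) * (RR n y * (kf^^d) (CC n y)) + 1/2)"
proof -
  have c: "CC n y \<in> {-1..1}" using CC_range[OF n] .
  have "vinner n y e1 / vnorm n y = CC n y"
    unfolding vinner_e1[OF n] CC_def RR_vnorm by (simp add: divide_inverse)
  then have "vangle n y = arccos (CC n y)" unfolding vangle_def by simp
  moreover have "(gmap^^d) (arccos (CC n y)) = arccos ((kf^^d) (CC n y))" using gmapd_arccos[OF c] .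
  moreover have "cos (arccos ((kf^^d) (CC n y))) = (kf^^d) (CC n y)"
    using kfd_range[OF c, of d] by (intro cos_arccos) auto
  moreover have "(vnorm n y)\<^sup>2 = NN n y" unfolding vn_sq NN_def ..
  ultimately show ?thesis unfolding loss_def RR_vnorm by simp
qed
lemma alg: "(R::real) > 0 \<Longrightarrow> (1/2) * (2 * yi) + ((-1) * (R * (Q * (y0 * ((- (inverse R ^ Suc (Suc 0))) * (inverse R / 2 * (2 * yi))) + inverse R * e))
          + F * (inverse R / 2 * (2 * yi))) + 0)
        = yi - (F - (y0 * inverse R) * Q) * (yi / R) - Q * e"
proof -
  assume R: "R > 0"
  define r where "r = inverse R"
  have Rr: "R * r = 1" using R by (simp add: r_def)
  have e1: "yi / R = yi * r" by (simp add: r_def divide_inverse)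
  have e2: "R * (Q * (y0 * ((- (r ^ Suc (Suc 0))) * (r / 2 * (2 * yi))) + r * e)) = - (Q * y0 * r * r * yi) * (R * r) + Q * e * (R * r)"
    by (simp add: algebra_simps power2_eq_square)
  show ?thesis unfolding r_def[symmetric] e1 e2 Rr by (simp add: algebra_simps)
qed

definition Gam :: "nat \<Rightarrow> nat \<Rightarrow> (nat \<Rightarrow> real) \<Rightarrow> (nat \<Rightarrow> real)" where
  "Gam d n y = (\<lambda>i. y i - ((kf^^d) (CC n y) - CC n y * Fp d (CC n y)) * (y i / RR n y) - Fp d (CC n y) * e1 i)"

lemma loss_grad:
  assumes n: "1 \<le> n" and y: "y \<in> Rn n" and yp: "RR n y > 0"
  shows "has_grad n (loss d n) (Gam d n y) y"
proof -
  have Np: "NN n y > 0" using yp unfolding RR_def by simp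
  have gN: "has_grad n (NN n) (\<lambda>i. 2 * y i) y"
    using has_grad_N[OF y] unfolding NN_def[abs_def] .
  have gR: "has_grad n (RR n) (\<lambda>i. inverse (sqrt (NN n y)) / 2 * (2 * y i)) y"
    unfolding RR_def[abs_def] by (rule has_grad_chain[OF DERIV_real_sqrt[OF Np] _ y gN]) simp
  have gI: "has_grad n (\<lambda>z. inverse (RR n z))
      (\<lambda>i. (- (inverse (RR n y) ^ Suc (Suc 0))) * (inverse (sqrt (NN n y)) / 2 * (2 * y i))) y"
    by (rule has_grad_chain[OF DERIV_inverse[of "RR n y" UNIV] _ y gR]) (use yp in simp_all)
  have gC: "has_grad n (CC n) (\<lambda>i. y 0 * ((- (inverse (RR n y) ^ Suc (Suc 0))) * (inverse (sqrt (NN n y)) / 2 * (2 * y i))) + inverse (RR n y) * e1 i) y"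
    using has_grad_mult[OF y has_grad_coord0[OF n] gI] unfolding CC_def[abs_def] .
  have gF: "has_grad n (\<lambda>z. (kf^^d) (CC n z)) (\<lambda>i. Fp d (CC n y) * (y 0 * ((- (inverse (RR n y) ^ Suc (Suc 0))) * (inverse (sqrt (NN n y)) / 2 * (2 * y i))) + inverse (RR n y) * e1 i)) y"
    by (rule has_grad_chain[OF kfd_deriv[OF CC_range[OF n]] _ y gC]) (rule CC_range[OF n])
  have gRF: "has_grad n (\<lambda>z. RR n z * (kf^^d) (CC n z))
     (\<lambda>i. RR n y * (Fp d (CC n y) * (y 0 * ((- (inverse (RR n y) ^ Suc (Suc 0))) * (inverse (sqrt (NN n y)) / 2 * (2 * y i))) + inverse (RR n y) * e1 i))
          + (kf^^d) (CC n y) * (inverse (sqrt (NN n y)) / 2 * (2 * y i))) y"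
    by (rule has_grad_mult[OF y gR gF])
  have gL: "has_grad n (\<lambda>z. (1/2) * NN n z + ((-1) * (RR n z * (kf^^d) (CC n z)) + 1/2))
     (\<lambda>i. (1/2) * (2 * y i) + ((-1) * (RR n y * (Fp d (CC n y) * (y 0 * ((- (inverse (RR n y) ^ Suc (Suc 0))) * (inverse (sqrt (NN n y)) / 2 * (2 * y i))) + inverse (RR n y) * e1 i))
          + (kf^^d) (CC n y) * (inverse (sqrt (NN n y)) / 2 * (2 * y i))) + 0)) y"
    by (rule has_grad_add[OF has_grad_cmul[OF y gN] has_grad_add[OF has_grad_cmul[OF y gRF] has_grad_const]])
  show ?thesis
  proof (rule has_grad_cong[OF gL])
    show "\<And>z. (1/2) * NN n z + ((-1) * (RR n z * (kf^^d) (CC n z)) + 1/2) = loss d n z"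
      using loss_eq[OF n] by simp
    have R: "sqrt (NN n y) = RR n y" by (simp add: RR_def)
    show "(\<lambda>i. (1/2) * (2 * y i) + ((-1) * (RR n y * (Fp d (CC n y) * (y 0 * ((- (inverse (RR n y) ^ Suc (Suc 0))) * (inverse (sqrt (NN n y)) / 2 * (2 * y i))) + inverse (RR n y) * e1 i))
          + (kf^^d) (CC n y) * (inverse (sqrt (NN n y)) / 2 * (2 * y i))) + 0)) = Gam d n y"
      unfolding Gam_def R
    proof (rule ext)
      fix i
      show "(1/2) * (2 * y i) + ((-1) * (RR n y * (Fp d (CC n y) * (y 0 * ((- (inverse (RR n y) ^ Suc (Suc 0))) * (inverse (RR n y) / 2 * (2 * y i))) + inverse (RR n y) * e1 i))
          + (kf^^d) (CC n y) * (inverse (RR n y) / 2 * (2 * y i))) + 0)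
        = y i - ((kf^^d) (CC n y) - CC n y * Fp d (CC n y)) * (y i / RR n y) - Fp d (CC n y) * e1 i"
        using alg[OF yp] unfolding CC_def .
    qed
  qed
qed

definition UU :: "nat \<Rightarrow> (nat \<Rightarrow> real) \<Rightarrow> (nat \<Rightarrow> real)" where
  "UU n y = (\<lambda>i. y i / RR n y)"

lemma UU_norm: "RR n y > 0 \<Longrightarrow> vnorm n (UU n y) = 1"
proof -
  assume p: "RR n y > 0"
  have "vnorm n (UU n y) = vnorm n (\<lambda>i. inverse (RR n y) * y i)"
    unfolding UU_def by (simp add: divide_inverse mult.commute)
  also have "\<dots> = \<bar>inverse (RR n y)\<bar> * vnorm n y" by (rule vn_scale)
  also have "\<dots> = 1" using p unfolding RR_vnorm by simp
  finally show ?thesis .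
qed

lemma CC_UU: "CC n y = UU n y 0" by (simp add: CC_def UU_def divide_inverse)

lemma UU_lip:
  assumes x: "RR n x > 0" and y: "RR n y > 0"
  shows "vnorm n (\<lambda>i. UU n y i - UU n x i) \<le> 2 * vnorm n (\<lambda>i. y i - x i) / RR n x"
proof -
  define D where "D = vnorm n (\<lambda>i. y i - x i)"
  have eq: "(\<lambda>i. UU n y i - UU n x i) = (\<lambda>i. inverse (RR n x) * (y i - x i) + (inverse (RR n y) - inverse (RR n x)) * y i)"
    unfolding UU_def by (rule ext) (simp add: divide_inverse algebra_simps)
  have "vnorm n (\<lambda>i. UU n y i - UU n x i) \<le> vnorm n (\<lambda>i. inverse (RR n x) * (y i - x i)) + vnorm n (\<lambda>i. (inverse (RR n y) - inverse (RR n x)) * y i)"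
    unfolding eq by (rule vn_tri)
  also have "\<dots> = inverse (RR n x) * D + \<bar>inverse (RR n y) - inverse (RR n x)\<bar> * RR n y"
    unfolding vn_scale D_def using x by (simp add: RR_vnorm)
  also have "\<bar>inverse (RR n y) - inverse (RR n x)\<bar> * RR n y = \<bar>RR n x - RR n y\<bar> / RR n x"
  proof -
    have "inverse (RR n y) - inverse (RR n x) = (RR n x - RR n y) / (RR n x * RR n y)"
      using x y by (simp add: field_simps)
    then have "\<bar>inverse (RR n y) - inverse (RR n x)\<bar> = \<bar>RR n x - RR n y\<bar> / (RR n x * RR n y)"
      using x y by (simp add: abs_divide)
    then show ?thesis using y by simp
  qed
  finally have T: "vnorm n (\<lambda>i. UU n y i - UU n x i) \<le> inverse (RR n x) * D + \<bar>RR n x - RR n y\<bar> / RR n x" .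
  have "\<bar>RR n x - RR n y\<bar> \<le> D"
    unfolding RR_vnorm D_def using vn_rev[of n x y] vn_sub_comm[of n x y] by (simp add: abs_minus_commute)
  then have "\<bar>RR n x - RR n y\<bar> / RR n x \<le> D / RR n x" using x by (simp add: divide_right_mono)
  then have "inverse (RR n x) * D + \<bar>RR n x - RR n y\<bar> / RR n x \<le> inverse (RR n x) * D + D / RR n x" by simp
  with T have "vnorm n (\<lambda>i. UU n y i - UU n x i) \<le> inverse (RR n x) * D + D / RR n x" by linarith
  also have "\<dots> = 2 * D / RR n x" by (simp add: divide_inverse)
  finally show ?thesis unfolding D_def .
qed

lemma vn_e1: "1 \<le> n \<Longrightarrow> vnorm n e1 = 1"
proof -
  assume n: "1 \<le> n"
  have "(\<Sum>i<n. (e1 i)\<^sup>2) = (\<Sum>i<n. if i = 0 then 1 else 0)" unfolding e1_def by (intro sum.cong) auto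
  also have "\<dots> = 1" using n by (simp add: sum.delta)
  finally show ?thesis unfolding vnorm_def by simp
qed

lemma Gam_lip:
  assumes n: "1 \<le> n" and a: "0 < a" and xa: "a \<le> RR n x" and yp: "RR n y > 0"
  shows "vnorm n (\<lambda>i. Gam d n y i - Gam d n x i) \<le> (1 + (8 + 12 * real d) / a) * vnorm n (\<lambda>i. y i - x i)"
proof -
  have xp: "RR n x > 0" using a xa by linarith
  define D where "D = vnorm n (\<lambda>i. y i - x i)"
  define w where "w = vnorm n (\<lambda>i. UU n y i - UU n x i)"
  define Cx where "Cx = CC n x"
  define Cy where "Cy = CC n y"
  define Qx where "Qx = Fp d Cx"
  define Qy where "Qy = Fp d Cy"
  define Fx where "Fx = (kf^^d) Cx"
  define Fy where "Fy = (kf^^d) Cy"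
  define Px where "Px = Fx - Cx * Qx"
  define Py where "Py = Fy - Cy * Qy"
  have D0: "0 \<le> D" by (simp add: D_def)
  have w0: "0 \<le> w" by (simp add: w_def)
  have cx: "Cx \<in> {-1..1}" "Cy \<in> {-1..1}" using CC_range[OF n] by (auto simp: Cx_def Cy_def)
  have wD: "w \<le> 2 * D / a"
  proof -
    have "w \<le> 2 * D / RR n x" unfolding w_def D_def by (rule UU_lip[OF xp yp])
    also have "\<dots> \<le> 2 * D / a" using a xa D0 by (intro divide_left_mono) auto
    finally show ?thesis .
  qed
  have Cw: "\<bar>Cy - Cx\<bar> \<le> w"
  proof -
    have "\<bar>Cy - Cx\<bar> = \<bar>(\<lambda>i. UU n y i - UU n x i) 0\<bar>" by (simp add: Cx_def Cy_def CC_UU)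
    also have "\<dots> \<le> w" unfolding w_def using n by (intro vn_coord) simp
    finally show ?thesis .
  qed
  have Qw: "\<bar>Qy - Qx\<bar> \<le> 3 * real d * w"
  proof -
    have "\<bar>Qy - Qx\<bar> \<le> real d * \<bar>arccos Cy - arccos Cx\<bar>" unfolding Qx_def Qy_def by (rule Fp_lip[OF cx(2) cx(1)])
    also have "\<bar>arccos Cy - arccos Cx\<bar> \<le> 3 * w"
      unfolding Cx_def Cy_def CC_UU w_def by (rule angle_lip[OF n UU_norm[OF yp] UU_norm[OF xp]])
    then have "real d * \<bar>arccos Cy - arccos Cx\<bar> \<le> real d * (3 * w)" by (intro mult_left_mono) auto
    finally show ?thesis by simp
  qed
  have Fw: "\<bar>Fy - Fx\<bar> \<le> w" using kfd_lip[OF cx(2) cx(1), of d] Cw by (simp add: Fx_def Fy_def)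
  have Qr: "0 \<le> Qy \<and> Qy \<le> 1" "0 \<le> Qx \<and> Qx \<le> 1" using Fp_range cx by (auto simp: Qx_def Qy_def)
  have Fr: "\<bar>Fx\<bar> \<le> 1" using kfd_range[OF cx(1), of d] by (auto simp: Fx_def)
  have Pw: "\<bar>Py - Px\<bar> \<le> 2 * w + 3 * real d * w"
  proof -
    have "Py - Px = (Fy - Fx) - ((Cy - Cx) * Qy + Cx * (Qy - Qx))" by (simp add: Py_def Px_def algebra_simps)
    then have "\<bar>Py - Px\<bar> \<le> \<bar>Fy - Fx\<bar> + \<bar>Cy - Cx\<bar> * \<bar>Qy\<bar> + \<bar>Cx\<bar> * \<bar>Qy - Qx\<bar>"
      by (simp add: abs_mult[symmetric])
    also have "\<dots> \<le> w + w * 1 + 1 * (3 * real d * w)"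
      using Fw Cw Qr cx Qw w0 by (intro add_mono mult_mono) auto
    finally show ?thesis by simp
  qed
  have Pr: "\<bar>Px\<bar> \<le> 2"
  proof -
    have "\<bar>Px\<bar> \<le> \<bar>Fx\<bar> + \<bar>Cx\<bar> * \<bar>Qx\<bar>" unfolding Px_def by (metis abs_mult abs_triangle_ineq4)
    also have "\<dots> \<le> 1 + 1 * 1" using Fr cx Qr by (intro add_mono mult_mono) auto
    finally show ?thesis by simp
  qed
  have geq: "(\<lambda>i. Gam d n y i - Gam d n x i) =
      (\<lambda>i. (y i - x i) - ((Py - Px) * UU n y i + Px * (UU n y i - UU n x i)) - (Qy - Qx) * e1 i)"
    unfolding Gam_def UU_def Px_def Py_def Qx_def Qy_def Fx_def Fy_def Cx_def Cy_def
    by (rule ext) (simp add: algebra_simps)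
  have "vnorm n (\<lambda>i. Gam d n y i - Gam d n x i)
     \<le> vnorm n (\<lambda>i. (y i - x i) - ((Py - Px) * UU n y i + Px * (UU n y i - UU n x i))) + vnorm n (\<lambda>i. (Qy - Qx) * e1 i)"
    unfolding geq by (rule vn_tri_sub)
  also have "vnorm n (\<lambda>i. (y i - x i) - ((Py - Px) * UU n y i + Px * (UU n y i - UU n x i)))
     \<le> D + vnorm n (\<lambda>i. (Py - Px) * UU n y i + Px * (UU n y i - UU n x i))"
    unfolding D_def by (rule vn_tri_sub)
  also have "vnorm n (\<lambda>i. (Py - Px) * UU n y i + Px * (UU n y i - UU n x i))
     \<le> vnorm n (\<lambda>i. (Py - Px) * UU n y i) + vnorm n (\<lambda>i. Px * (UU n y i - UU n x i))"
    by (rule vn_tri)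
  also have "vnorm n (\<lambda>i. (Py - Px) * UU n y i) = \<bar>Py - Px\<bar>"
    unfolding vn_scale UU_norm[OF yp] by simp
  also have "vnorm n (\<lambda>i. Px * (UU n y i - UU n x i)) = \<bar>Px\<bar> * w"
    unfolding vn_scale w_def ..
  also have "vnorm n (\<lambda>i. (Qy - Qx) * e1 i) = \<bar>Qy - Qx\<bar>"
    unfolding vn_scale vn_e1[OF n] by simp
  finally have "vnorm n (\<lambda>i. Gam d n y i - Gam d n x i) \<le> D + (\<bar>Py - Px\<bar> + \<bar>Px\<bar> * w) + \<bar>Qy - Qx\<bar>"
    by simp
  also have "\<dots> \<le> D + ((2 * w + 3 * real d * w) + 2 * w) + 3 * real d * w"
    using Pw Pr Qw w0 by (intro add_mono mult_right_mono) auto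
  also have "\<dots> = D + (4 + 6 * real d) * w" by (simp add: algebra_simps)
  also have "\<dots> \<le> D + (4 + 6 * real d) * (2 * D / a)" using wD by (intro add_left_mono mult_left_mono) auto
  also have "\<dots> = (1 + (8 + 12 * real d) / a) * D" using a by (simp add: field_simps)
  finally show ?thesis unfolding D_def .
qed


lemma NN_RR: "NN n y = (RR n y)\<^sup>2" by (simp add: RR_def NN_nonneg)

lemma part1:
  assumes a: "0 < a" and ab: "a < b" and n: "1 \<le> n"
    and xa: "a \<le> vnorm n x" and xb: "vnorm n x \<le> b" and ya: "a \<le> vnorm n y" and yb: "vnorm n y \<le> b"
  shows "\<bar>loss d n x - loss d n y\<bar> \<le> (b + 1 + 2 * b / a) * vnorm n (vsub x y)"
proof -
  define D where "D = vnorm n (vsub x y)"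
  have Dd: "D = vnorm n (\<lambda>i. x i - y i)" by (simp add: D_def vsub_def)
  have D0: "0 \<le> D" by (simp add: D_def)
  have R: "a \<le> RR n x" "RR n x \<le> b" "a \<le> RR n y" "RR n y \<le> b" using xa xb ya yb by (auto simp: RR_vnorm)
  have RD: "\<bar>RR n x - RR n y\<bar> \<le> D" unfolding Dd RR_vnorm by (rule vn_rev)
  define Fx where "Fx = (kf^^d) (CC n x)"
  define Fy where "Fy = (kf^^d) (CC n y)"
  have cx: "CC n x \<in> {-1..1}" "CC n y \<in> {-1..1}" using CC_range[OF n] by auto
  have Fr: "\<bar>Fx\<bar> \<le> 1" using kfd_range[OF cx(1), of d] by (auto simp: Fx_def)
  have FD: "\<bar>Fx - Fy\<bar> \<le> 2 * D / a"
  proof -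
    have "\<bar>Fx - Fy\<bar> \<le> \<bar>CC n x - CC n y\<bar>" unfolding Fx_def Fy_def by (rule kfd_lip[OF cx])
    also have "\<dots> = \<bar>(\<lambda>i. UU n x i - UU n y i) 0\<bar>" by (simp add: CC_UU)
    also have "\<dots> \<le> vnorm n (\<lambda>i. UU n x i - UU n y i)" using n by (intro vn_coord) simp
    also have "\<dots> \<le> 2 * D / RR n y" unfolding Dd using a R by (intro UU_lip) auto
    also have "\<dots> \<le> 2 * D / a" using a R D0 by (intro divide_left_mono) auto
    finally show ?thesis .
  qed
  have N: "\<bar>NN n x - NN n y\<bar> \<le> 2 * b * D"
  proof -
    have "NN n x - NN n y = (RR n x - RR n y) * (RR n x + RR n y)" unfolding NN_RR by (simp add: power2_eq_square algebra_simps)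
    then have "\<bar>NN n x - NN n y\<bar> = \<bar>RR n x - RR n y\<bar> * (RR n x + RR n y)" using R a by (simp add: abs_mult)
    also have "\<dots> \<le> D * (2 * b)" using RD R a D0 by (intro mult_mono) auto
    finally show ?thesis by (simp add: mult.commute)
  qed
  have P: "\<bar>RR n x * Fx - RR n y * Fy\<bar> \<le> D + b * (2 * D / a)"
  proof -
    have "RR n x * Fx - RR n y * Fy = (RR n x - RR n y) * Fx + RR n y * (Fx - Fy)" by (simp add: algebra_simps)
    then have "\<bar>RR n x * Fx - RR n y * Fy\<bar> \<le> \<bar>(RR n x - RR n y) * Fx\<bar> + \<bar>RR n y * (Fx - Fy)\<bar>"
      by (simp only: abs_triangle_ineq)
    also have "\<dots> = \<bar>RR n x - RR n y\<bar> * \<bar>Fx\<bar> + RR n y * \<bar>Fx - Fy\<bar>"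
      using R a by (simp add: abs_mult)
    also have "\<dots> \<le> D * 1 + b * (2 * D / a)" using RD Fr R FD a by (intro add_mono mult_mono) auto
    finally show ?thesis by simp
  qed
  have "loss d n x - loss d n y = (1/2) * (NN n x - NN n y) - (RR n x * Fx - RR n y * Fy)"
    unfolding loss_eq[OF n] Fx_def Fy_def by (simp add: algebra_simps)
  then have L1: "\<bar>loss d n x - loss d n y\<bar> \<le> \<bar>(1/2) * (NN n x - NN n y)\<bar> + \<bar>RR n x * Fx - RR n y * Fy\<bar>"
    by (simp only: abs_triangle_ineq4)
  have L2: "\<bar>(1/2) * (NN n x - NN n y)\<bar> = (1/2) * \<bar>NN n x - NN n y\<bar>" by (simp add: abs_mult)
  have L3: "(1/2) * (2 * b * D) + (D + b * (2 * D / a)) = (b + 1 + 2 * b / a) * D" by (simp add: algebra_simps)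
  have "\<bar>loss d n x - loss d n y\<bar> \<le> (1/2) * \<bar>NN n x - NN n y\<bar> + \<bar>RR n x * Fx - RR n y * Fy\<bar>"
    using L1 unfolding L2 .
  also have "\<dots> \<le> (1/2) * (2 * b * D) + (D + b * (2 * D / a))" using N P by (intro add_mono) auto
  finally have "\<bar>loss d n x - loss d n y\<bar> \<le> (b + 1 + 2 * b / a) * D" unfolding L3 .
  then show ?thesis unfolding D_def .
qed

lemma mv_scale: "mv n H (\<lambda>i. t * v i) = (\<lambda>i. t * mv n H v i)"
  by (rule ext) (simp add: mv_def sum_distrib_left algebra_simps)

lemma part2:
  assumes a: "0 < a" and n: "1 \<le> n" and x: "x \<in> Rn n" and xa: "a \<le> vnorm n x"
    and T: "twice_diff_hess n (loss d n) x H"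
  shows "opnorm n H \<le> 1 + (8 + 12 * real d) / a"
proof -
  define K where "K = 1 + (8 + 12 * real d) / a"
  have K0: "0 \<le> K" using a by (simp add: K_def add_nonneg_nonneg)
  obtain r G where r: "r > 0"
    and Gg: "\<forall>y\<in>Rn n. vnorm n (vsub y x) < r \<longrightarrow> has_grad n (loss d n) (G y) y"
    and GH: "\<forall>e>0. \<exists>\<delta>>0. \<forall>h\<in>Rn n. vnorm n h < \<delta> \<longrightarrow>
        vnorm n (vsub (vsub (G (vadd x h)) (G x)) (mv n H h)) \<le> e * vnorm n h"
    using T unfolding twice_diff_hess_def by blast
  define \<rho> where "\<rho> = min r (a/2)"
  have \<rho>: "\<rho> > 0" using r a by (simp add: \<rho>_def)
  have Geq: "G y = Gam d n y" "RR n y > 0" if y: "y \<in> Rn n" "vnorm n (vsub y x) < \<rho>" for y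
  proof -
    have "\<bar>vnorm n y - vnorm n x\<bar> \<le> vnorm n (vsub y x)" unfolding vsub_def by (rule vn_rev)
    then show yp: "RR n y > 0" using y xa unfolding RR_vnorm \<rho>_def by linarith
    have "has_grad n (loss d n) (G y) y" using Gg y \<rho>_def by auto
    then show "G y = Gam d n y" using has_grad_unique loss_grad[OF n y(1) yp] by blast
  qed
  have xR: "a \<le> RR n x" using xa by (simp add: RR_vnorm)
  have bnd: "vnorm n (mv n H v) \<le> K * vnorm n v" if v: "v \<in> Rn n" for v
  proof (cases "vnorm n v = 0")
    case True
    then have "\<And>j. j < n \<Longrightarrow> v j = 0" using vn_zero by blast
    then have "mv n H v = (\<lambda>i. 0)" unfolding mv_def by (intro ext) auto
    then show ?thesis using True by (simp add: vnorm_def)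
  next
    case False
    then have vp: "vnorm n v > 0" using vn_nonneg[of n v] by linarith
    show ?thesis
    proof (rule field_le_epsilon)
      fix e :: real assume e: "0 < e"
      have ev: "e / vnorm n v > 0" using e vp by simp
      obtain \<delta> where \<delta>: "\<delta> > 0" "\<forall>h\<in>Rn n. vnorm n h < \<delta> \<longrightarrow>
          vnorm n (vsub (vsub (G (vadd x h)) (G x)) (mv n H h)) \<le> (e / vnorm n v) * vnorm n h"
        using GH ev by blast
      define t where "t = min \<delta> \<rho> / (2 * vnorm n v)"
      have t: "t > 0" using \<delta> \<rho> vp by (simp add: t_def)
      define h where "h = (\<lambda>i. t * v i)"
      have hR: "h \<in> Rn n" using v by (simp add: h_def Rn_def)
      have hn: "vnorm n h = t * vnorm n v" unfolding h_def vn_scale using t by simp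
      have "t * vnorm n v = min \<delta> \<rho> / 2" using vp by (simp add: t_def)
      then have hs: "vnorm n h < \<delta>" "vnorm n h < \<rho>" using hn \<delta> \<rho> by auto
      have xh: "vadd x h \<in> Rn n" using Rn_vadd[OF x hR] .
      have dxh: "vnorm n (vsub (vadd x h) x) = vnorm n h" by (simp add: vsub_def vadd_def)
      have dxx: "vnorm n (vsub x x) = 0" by (simp add: vsub_def vnorm_def)
      have G1: "G (vadd x h) = Gam d n (vadd x h)" "RR n (vadd x h) > 0" using Geq[OF xh] dxh hs by auto
      have G2: "G x = Gam d n x" using Geq[OF x] dxx \<rho> by auto
      define A where "A = (\<lambda>i. Gam d n (vadd x h) i - Gam d n x i)"
      have "vnorm n A \<le> K * vnorm n (\<lambda>i. vadd x h i - x i)"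
        unfolding A_def K_def by (rule Gam_lip[OF n a xR G1(2)])
      also have "(\<lambda>i. vadd x h i - x i) = h" by (simp add: vadd_def)
      finally have An: "vnorm n A \<le> K * vnorm n h" .
      have Mn: "vnorm n (\<lambda>i. A i - mv n H h i) \<le> (e / vnorm n v) * vnorm n h"
        using \<delta>(2) hR hs G1 G2 unfolding A_def vsub_def by auto
      have "mv n H h = (\<lambda>i. A i - (A i - mv n H h i))" by simp
      then have "vnorm n (mv n H h) \<le> vnorm n A + vnorm n (\<lambda>i. A i - mv n H h i)"
        by (metis (no_types) vn_tri_sub)
      also have "\<dots> \<le> K * vnorm n h + (e / vnorm n v) * vnorm n h" using An Mn by simp
      finally have "t * vnorm n (mv n H v) \<le> t * (K * vnorm n v + e)"
        unfolding h_def mv_scale vn_scale hn[unfolded h_def] using t vp by (simp add: algebra_simps)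
      then show "vnorm n (mv n H v) \<le> K * vnorm n v + e" using t by simp
    qed
  qed
  have "opnorm n H \<le> K"
    unfolding opnorm_def
  proof (rule cSup_least)
    show "{vnorm n (mv n H v) |v. v \<in> Rn n \<and> vnorm n v \<le> 1} \<noteq> {}"
    proof -
      have "vnorm n (mv n H (\<lambda>_. 0)) \<in> {vnorm n (mv n H v) |v. v \<in> Rn n \<and> vnorm n v \<le> 1}"
        by (auto simp: Rn_def vnorm_def intro!: exI[of _ "\<lambda>_. 0"])
      then show ?thesis by blast
    qed
  next
    fix z assume "z \<in> {vnorm n (mv n H v) |v. v \<in> Rn n \<and> vnorm n v \<le> 1}"
    then obtain v where v: "v \<in> Rn n" "vnorm n v \<le> 1" "z = vnorm n (mv n H v)" by blast
    have "z \<le> K * vnorm n v" using bnd v by simp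
    also have "\<dots> \<le> K * 1" using v K0 by (intro mult_left_mono) auto
    finally show "z \<le> K" by simp
  qed
  then show ?thesis by (simp add: K_def)
qed


theorem mainTheorem4:
  fixes d :: nat
  assumes "d \<ge> 1"
  shows "(\<forall>a b. 0 < a \<and> a < b \<longrightarrow> (\<exists>C. \<forall>n\<ge>1. \<forall>x\<in>Rn n. \<forall>y\<in>Rn n.
            a \<le> vnorm n x \<and> vnorm n x \<le> b \<and> a \<le> vnorm n y \<and> vnorm n y \<le> b \<longrightarrow>
            \<bar>loss d n x - loss d n y\<bar> \<le> C * vnorm n (vsub x y)))
       \<and> (\<forall>a>0. \<exists>C. \<forall>n\<ge>1. \<forall>x\<in>Rn n. \<forall>H.
            a \<le> vnorm n x \<and> twice_diff_hess n (loss d n) x H \<longrightarrow> opnorm n H \<le> C)"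
proof (intro conjI allI impI)
  fix a b :: real assume ab: "0 < a \<and> a < b"
  show "\<exists>C. \<forall>n\<ge>1. \<forall>x\<in>Rn n. \<forall>y\<in>Rn n.
            a \<le> vnorm n x \<and> vnorm n x \<le> b \<and> a \<le> vnorm n y \<and> vnorm n y \<le> b \<longrightarrow>
            \<bar>loss d n x - loss d n y\<bar> \<le> C * vnorm n (vsub x y)"
    using part1[of a b] ab by blast
next
  fix a :: real assume a: "0 < a"
  show "\<exists>C. \<forall>n\<ge>1. \<forall>x\<in>Rn n. \<forall>H.
            a \<le> vnorm n x \<and> twice_diff_hess n (loss d n) x H \<longrightarrow> opnorm n H \<le> C"
    using part2[OF a] by blast
qed

end
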